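(* Consider the graph whose vertices are the admissible Hilbert polynomials and whose edges are the pairs $(P,\sigma(P))$ and $(P,\lambda(P))$ for all admissible Hilbert polynomials $P$. This graph is an infinite binary tree (each vertex $P$ having the two children $\sigma(P)$ and $\lambda(P)$), whose root is the constant polynomial $1$.
   Context: Binomial coefficients are polynomials in $t$: $\binom{t+a}{b}=\frac{(t+a)\cdots(t+a-b+1)}{b!}$ for $b\ge0$ and $0$ for $b<0$. A polynomial $P\in\mathbb{Q}[t]$ is an admissible Hilbert polynomial if it is the Hilbert polynomial of a nonempty closed subscheme of some projective space over an algebraically closed field; equivalently it has a (unique) Gotzmann expression $P(t)=\sum_{j=1}^r\binom{t+b_j-(j-1)}{b_j}$ with integers $b_1\ge\dots\ge b_r\ge0$, and equivalently a (unique) Macaulay–Hartshorne expression $P(t)=\sum_{i=0}^d\binom{t+i}{i+1}-\binom{t+i-e_i}{i+1}$ with integers $e_0\ge e_1\ge\dots\ge e_d>0$. Define $\sigma(P):=1+P$ (Gotzmann partition $(b_1,\dots,b_r,0)$, Macaulay–Hartshorne partition $(e_0+1,e_1,\dots,e_d)$) and $\lambda(P)$ the admissible polynomial with Gotzmann expression $\sum_{j=1}^r\binom{t+b_j+1-(j-1)}{b_j+1}$ (Macaulay–Hartshorne partition $(e_0,e_0,e_1,\dots,e_d)$). *)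

theory Defs
  imports "HOL-Computational_Algebra.Polynomial"
begin

text \<open>The binomial coefficient (t+a choose b) as a polynomial in t over the rationals;
  zero for negative b.\<close>
definition binpoly :: "int \<Rightarrow> int \<Rightarrow> rat poly" where
  "binpoly a b = (if b < 0 then 0 else
     smult (1 / fact (nat b)) (\<Prod>i<nat b. [:of_int a - of_int (int i), 1:]))"

definition gotz_partition :: "nat list \<Rightarrow> bool" where
  "gotz_partition bs \<longleftrightarrow> bs \<noteq> [] \<and> sorted_wrt (\<ge>) bs"

text \<open>Gotzmann expression: sum over j=1..r of (t + b_j - (j-1) choose b_j);
  list index i corresponds to j = i+1.\<close>
definition gotz_poly :: "nat list \<Rightarrow> rat poly" where
  "gotz_poly bs = (\<Sum>i<length bs. binpoly (int (bs ! i) - int i) (int (bs ! i)))"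

definition admissible :: "rat poly \<Rightarrow> bool" where
  "admissible P \<longleftrightarrow> (\<exists>bs. gotz_partition bs \<and> P = gotz_poly bs)"

definition gotzmann_of :: "rat poly \<Rightarrow> nat list" where
  "gotzmann_of P = (THE bs. gotz_partition bs \<and> P = gotz_poly bs)"

definition sigma_op :: "rat poly \<Rightarrow> rat poly" where
  "sigma_op P = 1 + P"

definition lambda_op :: "rat poly \<Rightarrow> rat poly" where
  "lambda_op P = gotz_poly (map Suc (gotzmann_of P))"

definition child :: "rat poly \<Rightarrow> rat poly \<Rightarrow> bool" where
  "child P Q \<longleftrightarrow> admissible P \<and> (Q = sigma_op P \<or> Q = lambda_op P)"

end

theory Submission imports Defs begin
fun Gk :: "nat \<Rightarrow> nat list \<Rightarrow> rat poly" where
  "Gk k [] = 0"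
| "Gk k (b # bs) = binpoly (int b - int k) (int b) + Gk (Suc k) bs"

lemma prod_lin: "degree (\<Prod>i<n. [:c i, (1::rat):]) = n \<and> coeff (\<Prod>i<n. [:c i, (1::rat):]) n = 1"
proof (induction n)
  case 0 then show ?case by simp
next
  case (Suc n)
  let ?p = "\<Prod>i<n. [:c i, (1::rat):]"
  have nz: "?p \<noteq> 0" using Suc by auto
  have d: "degree (?p * [:c n, 1:]) = Suc n"
    using Suc nz by (subst degree_mult_eq) auto
  have "coeff (?p * [:c n, 1:]) (Suc n) = 1"
    using lead_coeff_mult[of ?p "[:c n, 1:]"] d Suc by simp
  then show ?case using d by (simp only: prod.lessThan_Suc)
qed

lemma binpoly_deg: "degree (binpoly a (int b)) = b"
  unfolding binpoly_def using prod_lin[of "\<lambda>i. of_int a - of_int (int i)" b]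
  by (simp add: degree_smult_eq)

lemma binpoly_coeff: "coeff (binpoly a (int b)) b = 1 / fact b"
  unfolding binpoly_def using prod_lin[of "\<lambda>i. of_int a - of_int (int i)" b]
  by simp

lemma binpoly_0: "binpoly a 0 = 1"
  unfolding binpoly_def by simp

lemma Gk_bound: "\<forall>x\<in>set bs. x \<le> d \<Longrightarrow> degree (Gk k bs) \<le> d \<and> coeff (Gk k bs) d \<ge> 0"
proof (induction bs arbitrary: k)
  case Nil then show ?case by simp
next
  case (Cons b bs)
  have IH: "degree (Gk (Suc k) bs) \<le> d \<and> coeff (Gk (Suc k) bs) d \<ge> 0" using Cons by auto
  have bd: "b \<le> d" using Cons by auto
  have c: "coeff (binpoly (int b - int k) (int b)) d \<ge> 0"
  proof (cases "b = d")
    case True then show ?thesis using binpoly_coeff by simp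
  next
    case False then have "b < d" using bd by simp
    then show ?thesis using binpoly_deg[of "int b - int k" b] by (simp add: coeff_eq_0)
  qed
  show ?case using IH c bd binpoly_deg[of "int b - int k" b]
    by (auto intro: degree_add_le)
qed

lemma Gk_lead: "sorted_wrt (\<ge>) (b # bs) \<Longrightarrow> degree (Gk k (b#bs)) = b \<and> coeff (Gk k (b#bs)) b > 0"
proof -
  assume s: "sorted_wrt (\<ge>) (b # bs)"
  then have "\<forall>x\<in>set (b#bs). x \<le> b" by auto
  then have h: "degree (Gk k (b#bs)) \<le> b" by (rule Gk_bound[THEN conjunct1])
  have "\<forall>x\<in>set bs. x \<le> b" using s by auto
  then have "coeff (Gk (Suc k) bs) b \<ge> 0" by (rule Gk_bound[THEN conjunct2])
  then have pos: "coeff (Gk k (b#bs)) b > 0" by (simp add: binpoly_coeff add_pos_nonneg)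
  then have "b \<le> degree (Gk k (b#bs))" by (intro le_degree) simp
  then show ?thesis using h pos by simp
qed

lemma Gk_inj: "sorted_wrt (\<ge>) bs \<Longrightarrow> sorted_wrt (\<ge>) cs \<Longrightarrow> Gk k bs = Gk k cs \<Longrightarrow> bs = cs"
proof (induction bs arbitrary: cs k)
  case Nil
  then show ?case
  proof (cases cs)
    case (Cons c cs') then show ?thesis using Nil Gk_lead[of c cs' k] by auto
  qed simp
next
  case (Cons b bs)
  note P = Cons.prems and IH = Cons.IH
  show ?case
  proof (cases cs)
    case Nil then show ?thesis using P Gk_lead[of b bs k] by auto
  next
    case Cons2: (Cons c cs')
    have "b = c" using Gk_lead[of b bs k] Gk_lead[of c cs' k] P Cons2 by auto
    then have "Gk (Suc k) bs = Gk (Suc k) cs'" using P Cons2 by simp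
    then have "bs = cs'" using IH P Cons2 by auto
    then show ?thesis using \<open>b = c\<close> Cons2 by simp
  qed
qed

lemma Gk_sum: "Gk k bs = (\<Sum>i<length bs. binpoly (int (bs ! i) - int i - int k) (int (bs ! i)))"
proof (induction bs arbitrary: k)
  case Nil then show ?case by simp
next
  case (Cons b bs)
  show ?case unfolding Gk.simps Cons.IH
    by (simp add: sum.lessThan_Suc_shift algebra_simps del: sum.lessThan_Suc)
qed

lemma gotz_Gk: "gotz_poly bs = Gk 0 bs"
  unfolding gotz_poly_def Gk_sum by simp

lemma Gk_snoc: "Gk k (bs @ [0]) = Gk k bs + 1"
  by (induction bs arbitrary: k) (auto simp: binpoly_0)

lemma gotz_inj: "gotz_partition bs \<Longrightarrow> gotz_partition cs \<Longrightarrow> gotz_poly bs = gotz_poly cs \<Longrightarrow> bs = cs"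
  unfolding gotz_partition_def gotz_Gk using Gk_inj by blast

lemma gotzmann_of_eq: "gotz_partition bs \<Longrightarrow> gotzmann_of (gotz_poly bs) = bs"
  unfolding gotzmann_of_def by (rule the_equality) (auto dest: gotz_inj)

lemma gotz_snoc: "gotz_poly (bs @ [0]) = 1 + gotz_poly bs"
  unfolding gotz_Gk Gk_snoc by simp

lemma gotz_one: "gotz_poly [0] = 1"
  using gotz_snoc[of "[]"] by (simp add: gotz_Gk)

lemma part_snoc: "gotz_partition bs \<Longrightarrow> gotz_partition (bs @ [0])"
  unfolding gotz_partition_def by (auto simp: sorted_wrt_append)

lemma part_Suc: "gotz_partition bs \<Longrightarrow> gotz_partition (map Suc bs)"
  unfolding gotz_partition_def by (auto simp: sorted_wrt_map)

lemma part_one: "gotz_partition [0]"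
  unfolding gotz_partition_def by simp

lemma sigma_gotz: "sigma_op (gotz_poly bs) = gotz_poly (bs @ [0])"
  unfolding sigma_op_def gotz_snoc by simp

lemma lambda_gotz: "gotz_partition bs \<Longrightarrow> lambda_op (gotz_poly bs) = gotz_poly (map Suc bs)"
  unfolding lambda_op_def by (simp add: gotzmann_of_eq)

lemma snoc_ne_Suc: "bs @ [0] \<noteq> map Suc cs"
proof
  assume h: "bs @ [0] = map Suc cs"
  then have "cs \<noteq> []" by auto
  then have "last (map Suc cs) = Suc (last cs)" by (simp add: last_map)
  then show False using h by (metis last_snoc nat.distinct(1))
qed

lemma adm_E: "admissible P \<Longrightarrow> (\<And>bs. gotz_partition bs \<Longrightarrow> P = gotz_poly bs \<Longrightarrow> thesis) \<Longrightarrow> thesis"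
  unfolding admissible_def by blast

lemma parent_exists:
  assumes "gotz_partition bs" "bs \<noteq> [0]"
  shows "\<exists>cs. gotz_partition cs \<and> child (gotz_poly cs) (gotz_poly bs)
            \<and> sum_list cs + length cs < sum_list bs + length bs"
proof (cases "last bs = 0")
  case True
  have ne: "bs \<noteq> []" using assms unfolding gotz_partition_def by simp
  have eq: "bs = butlast bs @ [0]" using True ne by (metis append_butlast_last_id)
  have ne2: "butlast bs \<noteq> []" using eq assms(2) by (metis append_Nil)
  have "sorted_wrt (\<ge>) (butlast bs @ [0])" using assms eq unfolding gotz_partition_def by metis
  then have p: "gotz_partition (butlast bs)" using ne2 unfolding gotz_partition_def
    by (simp add: sorted_wrt_append)
  have c: "child (gotz_poly (butlast bs)) (gotz_poly bs)"
    unfolding child_def admissible_def using p sigma_gotz[of "butlast bs"] eq by metis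
  have "sum_list (butlast bs) + length (butlast bs) < sum_list bs + length bs"
    using eq ne by (metis add_Suc_right length_append_singleton lessI sum_list_append
        sum_list.Cons sum_list.Nil add_0_right)
  then show ?thesis using p c by blast
next
  case False
  have ne: "bs \<noteq> []" using assms unfolding gotz_partition_def by simp
  have srt: "sorted_wrt (\<ge>) bs" using assms unfolding gotz_partition_def by simp
  have pos: "\<forall>x\<in>set bs. x \<ge> 1"
  proof
    fix x assume x: "x \<in> set bs"
    have "x \<ge> last bs"
    proof (cases "x = last bs")
      case False
      obtain i where i: "i < length bs" "bs ! i = x" using x by (metis in_set_conv_nth)
      have "i < length bs - 1" using i False ne by (metis last_conv_nth le_neq_implies_less less_diff_conv2
          Suc_leI One_nat_def add.commute length_greater_0_conv plus_1_eq_Suc diff_Suc_1 not_less_eq)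
      moreover have "length bs - Suc 0 < length bs" using ne by simp
      ultimately have "bs ! (length bs - Suc 0) \<le> bs ! i"
        using srt \<open>i < length bs - 1\<close> unfolding sorted_wrt_iff_nth_less by simp
      then show ?thesis using i ne by (simp add: last_conv_nth)
    qed simp
    then show "x \<ge> 1" using False by simp
  qed
  define cs where "cs = map (\<lambda>x. x - 1) bs"
  have m: "map Suc cs = bs" unfolding cs_def using pos by (induction bs) auto
  have p: "gotz_partition cs" unfolding cs_def gotz_partition_def using ne srt
    by (auto simp: sorted_wrt_map elim!: sorted_wrt_mono_rel[rotated])
  have c: "child (gotz_poly cs) (gotz_poly bs)"
    unfolding child_def admissible_def using p lambda_gotz[OF p] m by metis
  have "sum_list bs = sum_list cs + length cs" using m[symmetric]
    by (simp add: sum_list_Suc)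
  then have "sum_list cs + length cs < sum_list bs + length bs" using ne m by auto
  then show ?thesis using p c by blast
qed

theorem theorem2p10:
  shows "admissible 1
    \<and> (\<forall>P. admissible P \<longrightarrow>
          admissible (sigma_op P) \<and> admissible (lambda_op P) \<and> sigma_op P \<noteq> lambda_op P)
    \<and> \<not> (\<exists>P. child P 1)
    \<and> (\<forall>Q. admissible Q \<and> Q \<noteq> 1 \<longrightarrow> (\<exists>!P. child P Q))
    \<and> (\<forall>Q. admissible Q \<longrightarrow> child\<^sup>*\<^sup>* 1 Q)
    \<and> infinite {P. admissible P}"
proof (intro conjI allI impI)
  show "admissible 1" unfolding admissible_def using part_one gotz_one by metis
next
  fix P assume "admissible P"
  then obtain bs where b: "gotz_partition bs" "P = gotz_poly bs" by (rule adm_E)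
  show "admissible (sigma_op P)" unfolding admissible_def using b sigma_gotz part_snoc by metis
  show "admissible (lambda_op P)" unfolding admissible_def using b lambda_gotz part_Suc by metis
  show "sigma_op P \<noteq> lambda_op P"
    using b sigma_gotz lambda_gotz part_snoc part_Suc gotz_inj snoc_ne_Suc by metis
next
  show "\<not> (\<exists>P. child P 1)"
  proof
    assume "\<exists>P. child P 1"
    then obtain P where c: "child P 1" by blast
    then obtain bs where b: "gotz_partition bs" "P = gotz_poly bs" unfolding child_def by (metis adm_E)
    have ne: "bs \<noteq> []" using b unfolding gotz_partition_def by simp
    from c have "1 = sigma_op P \<or> 1 = lambda_op P" unfolding child_def by auto
    then show False
    proof
      assume "1 = sigma_op P"
      then have "bs @ [0] = [0]" using b sigma_gotz part_snoc part_one gotz_inj gotz_one by metis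
      then show False using ne by simp
    next
      assume "1 = lambda_op P"
      then have "map Suc bs = [0]" using b lambda_gotz part_Suc part_one gotz_inj gotz_one by metis
      then show False by auto
    qed
  qed
next
  fix Q assume "admissible Q \<and> Q \<noteq> 1"
  then obtain bs where b: "gotz_partition bs" "Q = gotz_poly bs" "Q \<noteq> 1" by (metis adm_E)
  have "bs \<noteq> [0]" using b gotz_one by auto
  then obtain cs where "child (gotz_poly cs) Q" using parent_exists b by blast
  moreover have "P1 = P2" if c1: "child P1 Q" and c2: "child P2 Q" for P1 P2
  proof -
    obtain cs1 where d1: "gotz_partition cs1" "P1 = gotz_poly cs1" using c1 unfolding child_def by (metis adm_E)
    obtain cs2 where d2: "gotz_partition cs2" "P2 = gotz_poly cs2" using c2 unfolding child_def by (metis adm_E)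
    have h1: "Q = sigma_op P1 \<or> Q = lambda_op P1" and h2: "Q = sigma_op P2 \<or> Q = lambda_op P2"
      using c1 c2 unfolding child_def by auto
    show ?thesis
    proof (cases "Q = sigma_op P1")
      case s1: True
      show ?thesis
      proof (cases "Q = sigma_op P2")
        case True then show ?thesis using s1 unfolding sigma_op_def by simp
      next
        case False
        then have "Q = lambda_op P2" using h2 by simp
        then have "cs1 @ [0] = map Suc cs2" using s1 d1 d2 sigma_gotz lambda_gotz part_snoc part_Suc gotz_inj by metis
        then show ?thesis using snoc_ne_Suc by blast
      qed
    next
      case l1: False
      then have l1: "Q = lambda_op P1" using h1 by simp
      show ?thesis
      proof (cases "Q = sigma_op P2")
        case True
        then have "cs2 @ [0] = map Suc cs1" using l1 d1 d2 sigma_gotz lambda_gotz part_snoc part_Suc gotz_inj by metis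
        then show ?thesis using snoc_ne_Suc by blast
      next
        case False
        then have "Q = lambda_op P2" using h2 by simp
        then have "map Suc cs1 = map Suc cs2" using l1 d1 d2 lambda_gotz part_Suc gotz_inj by metis
        then have "cs1 = cs2" by (simp add: inj_map_eq_map)
        then show ?thesis using d1 d2 by simp
      qed
    qed
  qed
  ultimately show "\<exists>!P. child P Q" by blast
next
  fix Q assume "admissible Q"
  then obtain bs where b: "gotz_partition bs" "Q = gotz_poly bs" by (rule adm_E)
  have "\<forall>bs. sum_list bs + length bs = n \<longrightarrow> gotz_partition bs \<longrightarrow> child\<^sup>*\<^sup>* 1 (gotz_poly bs)" for n
  proof (induction n rule: less_induct)
    case (less n)
    show ?case
    proof (intro allI impI)
      fix bs assume n: "sum_list bs + length bs = n" and p: "gotz_partition bs"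
      show "child\<^sup>*\<^sup>* 1 (gotz_poly bs)"
      proof (cases "bs = [0]")
        case True then show ?thesis using gotz_one by simp
      next
        case False
        then obtain cs where cs: "gotz_partition cs" "child (gotz_poly cs) (gotz_poly bs)"
          "sum_list cs + length cs < n" using parent_exists p n by blast
        then have "child\<^sup>*\<^sup>* 1 (gotz_poly cs)" using less by blast
        then show ?thesis using cs(2) by (rule rtranclp.rtrancl_into_rtrancl)
      qed
    qed
  qed
  then show "child\<^sup>*\<^sup>* 1 Q" using b by blast
next
  define f where "f n = gotz_poly (replicate (Suc n) 0)" for n
  have pf: "gotz_partition (replicate (Suc n) 0)" for n
    unfolding gotz_partition_def by (simp add: sorted_wrt_iff_nth_less)
  have "inj f"
  proof (rule injI)
    fix m n assume "f m = f n"
    then have "replicate (Suc m) (0::nat) = replicate (Suc n) 0" using pf gotz_inj unfolding f_def by metis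
    then show "m = n" by (metis length_replicate nat.inject)
  qed
  then have "infinite (range f)" using finite_imageD[of f UNIV] by auto
  moreover have "range f \<subseteq> {P. admissible P}" unfolding f_def admissible_def using pf by blast
  ultimately show "infinite {P. admissible P}" using finite_subset by blast
qed

end
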